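(* Let $\kappa > 0$ and let $(X,d)$ be a complete CAT$(\kappa)$ space such that $d(v,w) < \pi/(2\sqrt{\kappa})$ for all $v,w \in X$. Let $f : X \to (-\infty,\infty]$ be a proper, convex and lower semi-continuous function which attains its minimum. Let $x_0 \in X$ and let $(\lambda_n)_{n\ge0}$ be a sequence of positive real numbers with $\sum_{n \ge 0}\lambda_n = \infty$. Define the sequence $(x_n)$ by \[ x_{n+1} = J_{\lambda_n}(x_n) = \operatorname{argmin}_{y \in X}\left[f(y) + \frac{1}{\lambda_n}\Psi_{x_n}(y)\right], \quad n \ge 0. \] Then $(x_n)$ $\Delta$-converges to a minimum point of $f$.
   Context: A geodesic space is a metric space in which any two points are joined by a geodesic segment; the point at distance $t\,d(x,y)$ from $x$ on such a segment is written $(1-t)x+ty$. A CAT$(\kappa)$ space ($\kappa>0$) is a metric space in which any two points at distance $<\pi/\sqrt{\kappa}$ are joined by a geodesic and every geodesic triangle of perimeter $<2\pi/\sqrt{\kappa}$ satisfies the CAT$(\kappa)$ comparison inequality with respect to its comparison triangle in the sphere of constant curvature $\kappa$. A function $f : X \to (-\infty,\infty]$ is proper if it is not identically $\infty$, and convex if $f((1-t)x+ty) \le (1-t)f(x)+tf(y)$ for all $x,y\in X$, $t\in[0,1]$. For $x \in X$, $\Psi_x : X \to [0,\infty)$ is defined by $\Psi_x(y) = \frac{1}{\kappa\cos(\sqrt{\kappa}\,d(y,x))} - \frac{\cos(\sqrt{\kappa}\,d(y,x))}{\kappa}$; for $\lambda>0$ the resolvent $J_\lambda(x) = \operatorname{argmin}_{y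 \in X}[f(y) + \frac{1}{\lambda}\Psi_x(y)]$ exists and is unique under the stated assumptions. $\Delta$-convergence: for a bounded sequence $(u_n)$ and $u \in X$ put $r(u,(u_n)) = \limsup_n d(u,u_n)$; the asymptotic radius is $r((u_n)) = \inf_{u\in X} r(u,(u_n))$ and the asymptotic center is $A((u_n)) = \{u \in X : r(u,(u_n)) = r((u_n))\}$. The sequence $(u_n)$ $\Delta$-converges to $u$ if $u$ is the unique point of the asymptotic center of every subsequence of $(u_n)$. *)

theory Defs
  imports "HOL-Analysis.Analysis"
begin

text \<open>Geodesic path from a to b: an isometric embedding of [0, d(a,b)] with
  endpoints a and b; the point (1-t)a + tb is gamma (t * dist a b).\<close>
definition geodesic_path :: "(real \<Rightarrow> 'a::metric_space) \<Rightarrow> 'a \<Rightarrow> 'a \<Rightarrow> bool" where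
  "geodesic_path \<gamma> a b \<longleftrightarrow> \<gamma> 0 = a \<and> \<gamma> (dist a b) = b \<and>
     (\<forall>s\<in>{0..dist a b}. \<forall>t\<in>{0..dist a b}. dist (\<gamma> s) (\<gamma> t) = \<bar>s - t\<bar>)"

text \<open>Model sphere of curvature kappa > 0: the sphere of radius 1/sqrt kappa in R^3
  with its intrinsic (great circle) metric.\<close>
definition model_sphere :: "real \<Rightarrow> (real^3) set" where
  "model_sphere \<kappa> = {v. norm v = 1 / sqrt \<kappa>}"

definition sph_dist :: "real \<Rightarrow> real^3 \<Rightarrow> real^3 \<Rightarrow> real" where
  "sph_dist \<kappa> u v = arccos (\<kappa> * (u \<bullet> v)) / sqrt \<kappa>"

text \<open>v is the comparison point on the (unique) model geodesic from A to B
  (of length L) at distance s from A.\<close>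
definition cmp_point :: "real \<Rightarrow> real^3 \<Rightarrow> real^3 \<Rightarrow> real \<Rightarrow> real \<Rightarrow> real^3 \<Rightarrow> bool" where
  "cmp_point \<kappa> A B L s v \<longleftrightarrow> v \<in> model_sphere \<kappa> \<and> sph_dist \<kappa> A v = s \<and> sph_dist \<kappa> v B = L - s"

definition CAT_space :: "real \<Rightarrow> 'a::metric_space itself \<Rightarrow> bool" where
  "CAT_space \<kappa> _ \<longleftrightarrow>
     (\<forall>x y::'a. dist x y < pi / sqrt \<kappa> \<longrightarrow> (\<exists>\<gamma>. geodesic_path \<gamma> x y)) \<and>
     (\<forall>p q r::'a. \<forall>\<gamma>1 \<gamma>2 \<gamma>3.
        dist p q + dist q r + dist r p < 2 * pi / sqrt \<kappa> \<and>
        geodesic_path \<gamma>1 p q \<and> geodesic_path \<gamma>2 q r \<and> geodesic_path \<gamma>3 r p \<longrightarrow>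
        (\<forall>P\<in>model_sphere \<kappa>. \<forall>Q\<in>model_sphere \<kappa>. \<forall>R\<in>model_sphere \<kappa>.
           sph_dist \<kappa> P Q = dist p q \<and> sph_dist \<kappa> Q R = dist q r \<and> sph_dist \<kappa> R P = dist r p \<longrightarrow>
           (\<forall>(a, b, \<gamma>, A, B) \<in> {(p, q, \<gamma>1, P, Q), (q, r, \<gamma>2, Q, R), (r, p, \<gamma>3, R, P)}.
            \<forall>(a', b', \<gamma>', A', B') \<in> {(p, q, \<gamma>1, P, Q), (q, r, \<gamma>2, Q, R), (r, p, \<gamma>3, R, P)}.
            \<forall>s\<in>{0..dist a b}. \<forall>s'\<in>{0..dist a' b'}. \<forall>v w.
              cmp_point \<kappa> A B (dist a b) s v \<and> cmp_point \<kappa> A' B' (dist a' b') s' w \<longrightarrow>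
              dist (\<gamma> s) (\<gamma>' s') \<le> sph_dist \<kappa> v w)))"

definition proper_fun :: "('a \<Rightarrow> ereal) \<Rightarrow> bool" where
  "proper_fun f \<longleftrightarrow> (\<exists>x. f x \<noteq> \<infinity>) \<and> (\<forall>x. f x \<noteq> -\<infinity>)"

definition geod_convex_fun :: "('a::metric_space \<Rightarrow> ereal) \<Rightarrow> bool" where
  "geod_convex_fun f \<longleftrightarrow>
     (\<forall>x y \<gamma> t. geodesic_path \<gamma> x y \<and> t \<in> {0..1} \<longrightarrow>
        f (\<gamma> (t * dist x y)) \<le> ereal (1 - t) * f x + ereal t * f y)"

definition lsc_fun :: "('a::topological_space \<Rightarrow> ereal) \<Rightarrow> bool" where
  "lsc_fun f \<longleftrightarrow> (\<forall>c. closed {x. f x \<le> c})"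

definition Psi :: "real \<Rightarrow> 'a::metric_space \<Rightarrow> 'a \<Rightarrow> real" where
  "Psi \<kappa> x y = 1 / (\<kappa> * cos (sqrt \<kappa> * dist y x)) - cos (sqrt \<kappa> * dist y x) / \<kappa>"

text \<open>The set of minimizers of y \<mapsto> f y + Psi_x(y)/lam (the resolvent J_lam(x) is its unique element).\<close>
definition resolvent_set :: "real \<Rightarrow> ('a::metric_space \<Rightarrow> ereal) \<Rightarrow> real \<Rightarrow> 'a \<Rightarrow> 'a set" where
  "resolvent_set \<kappa> f lam x =
     {y. \<forall>z. f y + ereal (Psi \<kappa> x y / lam) \<le> f z + ereal (Psi \<kappa> x z / lam)}"

definition asym_r :: "'a::metric_space \<Rightarrow> (nat \<Rightarrow> 'a) \<Rightarrow> ereal" where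
  "asym_r u s = limsup (\<lambda>n. ereal (dist u (s n)))"

definition asym_radius :: "(nat \<Rightarrow> 'a::metric_space) \<Rightarrow> ereal" where
  "asym_radius s = (INF u. asym_r u s)"

definition asym_center :: "(nat \<Rightarrow> 'a::metric_space) \<Rightarrow> 'a set" where
  "asym_center s = {u. asym_r u s = asym_radius s}"

definition Delta_converges :: "(nat \<Rightarrow> 'a::metric_space) \<Rightarrow> 'a \<Rightarrow> bool" where
  "Delta_converges s u \<longleftrightarrow> (\<forall>g. strict_mono g \<longrightarrow> asym_center (s \<circ> g) = {u})"

end

theory Submission
  imports Defs
begin


lemma sph_unit:
  fixes U V :: "real^3"
  assumes "\<kappa> > 0"
  shows "sph_dist \<kappa> ((1/sqrt \<kappa>) *\<^sub>R U) ((1/sqrt \<kappa>) *\<^sub>R V) = arccos (U \<bullet> V) / sqrt \<kappa>"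
proof -
  have "\<kappa> * (((1/sqrt \<kappa>) *\<^sub>R U) \<bullet> ((1/sqrt \<kappa>) *\<^sub>R V)) = U \<bullet> V"
    using assms by (simp add: power2_eq_square[symmetric])
  then show ?thesis by (simp add: sph_dist_def)
qed

lemma sphere_unit:
  fixes U :: "real^3"
  assumes "\<kappa> > 0"
  shows "((1/sqrt \<kappa>) *\<^sub>R U \<in> model_sphere \<kappa>) = (norm U = 1)"
  using assms by (simp add: model_sphere_def)

lemma unit_triangle:
  fixes a b D :: real
  assumes "0 < D" "0 \<le> a" "0 \<le> b" "D + a < pi" "b \<le> D + a" "D \<le> a + b" "a \<le> D + b"
  shows "\<exists>eP eQ eR :: real^3. norm eP = 1 \<and> norm eQ = 1 \<and> norm eR = 1 \<and>
     eP \<bullet> eQ = cos D \<and> eP \<bullet> eR = cos a \<and> eQ \<bullet> eR = cos b"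
proof -
  have sD: "sin D > 0" using assms by (intro sin_gt_zero) auto
  define u where "u = (cos b - cos D * cos a) / sin D"
  have c1: "cos (D + a) \<le> cos b"
    using assms by (subst cos_mono_le_eq) auto
  have c2: "cos b \<le> cos (D - a)"
  proof (cases "D \<ge> a")
    case True then show ?thesis using assms by (subst cos_mono_le_eq) auto
  next
    case False
    have "cos (D - a) = cos (a - D)" by (metis cos_minus minus_diff_eq)
    then show ?thesis using assms False by (simp, subst cos_mono_le_eq) auto
  qed
  have sa: "sin a \<ge> 0" using assms by (intro sin_ge_zero) auto
  have "\<bar>cos b - cos D * cos a\<bar> \<le> sin D * sin a"
    using c1 c2 by (simp add: cos_add cos_diff abs_le_iff)
  hence "\<bar>u\<bar> \<le> sin a" using sD by (simp add: u_def abs_div divide_le_eq mult.commute)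
  hence u2: "u^2 \<le> (sin a)^2" using sa by (metis abs_le_square_iff abs_of_nonneg)
  define w where "w = sqrt ((sin a)^2 - u^2)"
  have w2: "w^2 = (sin a)^2 - u^2" using u2 by (simp add: w_def)
  define eP :: "real^3" where "eP = vector [1,0,0]"
  define eQ :: "real^3" where "eQ = vector [cos D, sin D, 0]"
  define eR :: "real^3" where "eR = vector [cos a, u, w]"
  have n1: "norm eP = 1" by (simp add: eP_def norm_eq_sqrt_inner inner_vec_def sum_3)
  have n2: "norm eQ = 1" by (simp add: eQ_def norm_eq_sqrt_inner inner_vec_def sum_3
        power2_eq_square[symmetric])
  have "eR \<bullet> eR = (cos a)^2 + u^2 + w^2"
    by (simp add: eR_def inner_vec_def sum_3 power2_eq_square)
  also have "\<dots> = 1" using w2 by (simp add: sin_squared_eq)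
  finally have n3: "norm eR = 1" by (simp add: norm_eq_sqrt_inner)
  have i1: "eP \<bullet> eQ = cos D" by (simp add: eP_def eQ_def inner_vec_def sum_3)
  have i2: "eP \<bullet> eR = cos a" by (simp add: eP_def eR_def inner_vec_def sum_3)
  have "eQ \<bullet> eR = cos D * cos a + sin D * u" by (simp add: eQ_def eR_def inner_vec_def sum_3)
  also have "\<dots> = cos b" using sD by (simp add: u_def)
  finally have i3: "eQ \<bullet> eR = cos b" .
  show ?thesis using n1 n2 n3 i1 i2 i3 by blast
qed

lemma slerp:
  fixes eP eQ :: "real^3" and t D :: real
  assumes "norm eP = 1" "norm eQ = 1" "eP \<bullet> eQ = cos D" "sin D > 0"
  defines "V \<equiv> (sin ((1-t)*D) / sin D) *\<^sub>R eP + (sin (t*D) / sin D) *\<^sub>R eQ"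
  shows "norm V = 1" "eP \<bullet> V = cos (t*D)" "V \<bullet> eQ = cos ((1-t)*D)"
    "\<And>eR. V \<bullet> eR = (sin ((1-t)*D) * (eP \<bullet> eR) + sin (t*D) * (eQ \<bullet> eR)) / sin D"
proof -
  have s1: "sin ((1-t)*D) = sin D * cos (t*D) - cos D * sin (t*D)"
    by (metis left_diff_distrib' mult_1 sin_diff)
  have c1: "cos ((1-t)*D) = cos D * cos (t*D) + sin D * sin (t*D)"
    by (metis left_diff_distrib' mult_1 cos_diff)
  have s1': "sin (D - D*t) = sin D * cos (D*t) - cos D * sin (D*t)"
    using s1 by (simp add: algebra_simps)
  have c1': "cos (D - D*t) = cos D * cos (D*t) + sin D * sin (D*t)"
    using c1 by (simp add: algebra_simps)
  have pp: "eP \<bullet> eP = 1" "eQ \<bullet> eQ = 1" using assms(1,2) by (simp_all add: norm_eq_sqrt_inner)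
  have qp: "eQ \<bullet> eP = cos D" using assms(3) by (simp add: inner_commute)
  show "eP \<bullet> V = cos (t*D)"
    using assms(4) by (simp add: V_def inner_add_right pp assms(3) s1 field_simps s1')
  show "V \<bullet> eQ = cos ((1-t)*D)"
  proof -
    have e: "sin D * sin D + cos D * cos D = 1" by (simp add: add.commute)
    have e2: "cos D * (cos D * sin (D*t)) + sin D * (sin D * sin (D*t)) = sin (D*t)"
      by (metis e add.commute distrib_right mult.assoc mult_1)
    show ?thesis
    using assms(4) by (simp add: V_def inner_add_left pp qp s1 c1 field_simps s1' c1' assms(3) e2)
  qed
  show "\<And>eR. V \<bullet> eR = (sin ((1-t)*D) * (eP \<bullet> eR) + sin (t*D) * (eQ \<bullet> eR)) / sin D"
    by (simp add: V_def inner_add_left add_divide_distrib)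
  have "V \<bullet> V = 1"
  proof -
    have "V \<bullet> V = ((sin ((1-t)*D))^2 + 2 * sin ((1-t)*D) * sin (t*D) * cos D + (sin (t*D))^2) / (sin D)^2"
      using assms(4) by (simp add: V_def inner_add_left inner_add_right pp qp assms(3) field_simps power2_eq_square)
    also have "(sin ((1-t)*D))^2 + 2 * sin ((1-t)*D) * sin (t*D) * cos D + (sin (t*D))^2 = (sin D)^2"
    proof -
      have "(sin ((1-t)*D))^2 + 2 * sin ((1-t)*D) * sin (t*D) * cos D + (sin (t*D))^2
          = (sin ((1-t)*D) + sin (t*D) * cos D)^2 + (sin (t*D))^2 * (sin D)^2"
      proof -
        have e3: "cos D * (cos D * X) + sin D * (sin D * X) = X" for X
          by (metis sin_cos_squared_add3 distrib_right mult.assoc mult_1)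
        show ?thesis by (simp add: power2_eq_square algebra_simps e3)
      qed
      also have "sin ((1-t)*D) + sin (t*D) * cos D = sin D * cos (t*D)" by (simp add: s1)
      also have "(sin D * cos (t*D))^2 + (sin (t*D))^2 * (sin D)^2 = (sin D)^2"
        by (simp add: power_mult_distrib algebra_simps flip: distrib_left)
      finally show ?thesis .
    qed
    finally show ?thesis using assms(4) by simp
  qed
  then show "norm V = 1" by (simp add: norm_eq_sqrt_inner)
qed

locale smallcat =
  fixes \<kappa> :: real and ty :: "'a::metric_space itself"
  assumes kpos: "\<kappa> > 0" and cat: "CAT_space \<kappa> TYPE('a)"
    and diam: "\<And>v w::'a. dist v w < pi / (2 * sqrt \<kappa>)"
begin

abbreviation "k \<equiv> sqrt \<kappa>"

lemma kgt: "k > 0" using kpos by simp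

lemma kd: "k * dist (v::'a) w < pi/2"
  using diam[of v w] kgt by (simp add: field_simps)

lemma kd0: "0 \<le> k * dist (v::'a) w" using kgt by simp

lemma geo_ex: "\<exists>\<gamma>. geodesic_path \<gamma> (u::'a) v"
proof -
  have "dist u v < pi / k" using diam[of u v] kgt
    by (smt (verit, best) divide_pos_pos frac_less2 pi_gt_zero)
  then show ?thesis using cat unfolding CAT_space_def by blast
qed

lemma G2:
  fixes x y p :: 'a
  assumes g: "geodesic_path \<gamma> y p" and yp: "y \<noteq> p" and t: "0 \<le> t" "t \<le> 1"
  shows "sin (k * dist y p) * cos (k * dist x (\<gamma> (t * dist y p))) \<ge>
     sin ((1-t) * (k * dist y p)) * cos (k * dist x y) + sin (t * (k * dist y p)) * cos (k * dist x p)"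
proof -
  define D where "D = k * dist y p"
  define a where "a = k * dist x y"
  define b where "b = k * dist x p"
  have D0: "D > 0" using yp kgt by (simp add: D_def)
  have Dl: "D < pi/2" "a < pi/2" "b < pi/2" using kd by (auto simp: D_def a_def b_def)
  have a0: "a \<ge> 0" "b \<ge> 0" using kd0 by (auto simp: a_def b_def)
  have tri: "b \<le> D + a" "D \<le> a + b" "a \<le> D + b"
    using kgt dist_triangle[of x p y] dist_triangle[of y p x] dist_triangle[of x y p]
    by (auto simp: D_def a_def b_def dist_commute distrib_left[symmetric]) 
  obtain eP eQ eR :: "real^3" where e: "norm eP = 1" "norm eQ = 1" "norm eR = 1"
    "eP \<bullet> eQ = cos D" "eP \<bullet> eR = cos a" "eQ \<bullet> eR = cos b"
    using unit_triangle[OF D0 a0 _ tri] Dl by fastforce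
  have sD: "sin D > 0" using D0 Dl by (intro sin_gt_zero) auto
  define P where "P = (1/k) *\<^sub>R eP"
  define Q where "Q = (1/k) *\<^sub>R eQ"
  define R where "R = (1/k) *\<^sub>R eR"
  define V where "V = (sin ((1-t)*D) / sin D) *\<^sub>R eP + (sin (t*D) / sin D) *\<^sub>R eQ"
  note sl = slerp[OF e(1,2,4) sD, of t, folded V_def]
  have ac: "arccos (cos z) = z" if "0 \<le> z" "z \<le> pi" for z using that by (simp add: arccos_cos)
  have sph: "P \<in> model_sphere \<kappa>" "Q \<in> model_sphere \<kappa>" "R \<in> model_sphere \<kappa>"
    using e kpos by (simp_all add: P_def Q_def R_def sphere_unit)
  have dPQ: "sph_dist \<kappa> P Q = dist y p"
    using e kpos D0 Dl ac[of D] by (simp add: P_def Q_def sph_unit D_def)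
  have dQR: "sph_dist \<kappa> Q R = dist p x"
    using e kpos a0 Dl ac[of b] by (simp add: Q_def R_def sph_unit b_def dist_commute)
  have dRP: "sph_dist \<kappa> R P = dist x y"
    using e kpos a0 Dl ac[of a] by (simp add: P_def R_def sph_unit a_def inner_commute)
  obtain \<gamma>2 where g2: "geodesic_path \<gamma>2 p x" using geo_ex by blast
  obtain \<gamma>3 where g3: "geodesic_path \<gamma>3 x y" using geo_ex by blast
  have per: "dist y p + dist p x + dist x y < 2 * pi / k"
  proof -
    have "dist y p + dist p x + dist x y < 3 * (pi / (2*k))"
      using diam[of y p] diam[of p x] diam[of x y] by linarith
    also have "\<dots> \<le> 2 * pi / k" using kgt by (simp add: field_simps)
    finally show ?thesis .
  qed
  have H: "\<forall>(a, b, c, A, B) \<in> {(y, p, \<gamma>, P, Q), (p, x, \<gamma>2, Q, R), (x, y, \<gamma>3, R, P)}.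
            \<forall>(a', b', c', A', B') \<in> {(y, p, \<gamma>, P, Q), (p, x, \<gamma>2, Q, R), (x, y, \<gamma>3, R, P)}.
            \<forall>s\<in>{0..dist a b}. \<forall>s'\<in>{0..dist a' b'}. \<forall>v w.
              cmp_point \<kappa> A B (dist a b) s v \<and> cmp_point \<kappa> A' B' (dist a' b') s' w \<longrightarrow>
              dist (c s) (c' s') \<le> sph_dist \<kappa> v w"
    using cat[unfolded CAT_space_def, THEN conjunct2]
    apply -
    apply (drule spec[of _ y], drule spec[of _ p], drule spec[of _ x])
    apply (drule spec[of _ \<gamma>], drule spec[of _ \<gamma>2], drule spec[of _ \<gamma>3])
    apply (drule mp, use per g g2 g3 in blast)
    apply (drule bspec[of _ _ P], rule sph, drule bspec[of _ _ Q], rule sph, drule bspec[of _ _ R], rule sph)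
    apply (drule mp, use dPQ dQR dRP in blast)
    apply assumption
    done
  have H2: "\<forall>s\<in>{0..dist y p}. \<forall>s'\<in>{0..dist x y}. \<forall>v w.
              cmp_point \<kappa> P Q (dist y p) s v \<and> cmp_point \<kappa> R P (dist x y) s' w \<longrightarrow>
              dist (\<gamma> s) (\<gamma>3 s') \<le> sph_dist \<kappa> v w"
    using H
    apply -
    apply (drule bspec[of _ _ "(y,p,\<gamma>,P,Q)"], simp, simp only: prod.case)
    apply (drule bspec[of _ _ "(x,y,\<gamma>3,R,P)"], simp, simp only: prod.case)
    done
  have "t * D \<le> D" "(1-t) * D \<le> D" using t D0 by (simp_all add: mult_left_le_one_le)
  hence tD: "t * (k*dist y p) \<le> pi" "0 \<le> t * (k*dist y p)" "(1-t)*(k*dist y p) \<le> pi" "0 \<le> (1-t)*(k*dist y p)"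
    using Dl D0 t by (auto simp: D_def)
  have cv: "cmp_point \<kappa> P Q (dist y p) (t * dist y p) ((1/k) *\<^sub>R V)"
  proof -
    have "sph_dist \<kappa> P ((1/k) *\<^sub>R V) = arccos (cos (t*D)) / k"
      using kpos sl by (simp add: P_def sph_unit)
    also have "\<dots> = t * dist y p" using tD kgt by (subst ac) (auto simp: D_def)
    finally have 1: "sph_dist \<kappa> P ((1/k) *\<^sub>R V) = t * dist y p" .
    have "sph_dist \<kappa> ((1/k) *\<^sub>R V) Q = arccos (cos ((1-t)*D)) / k"
      using kpos sl by (simp add: Q_def sph_unit)
    also have "\<dots> = dist y p - t * dist y p" using tD kgt by (subst ac) (auto simp: D_def
       field_simps)
    finally have 2: "sph_dist \<kappa> ((1/k) *\<^sub>R V) Q = dist y p - t * dist y p" .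
    show ?thesis using 1 2 sl kpos by (simp add: cmp_point_def sphere_unit)
  qed
  have cw: "cmp_point \<kappa> R P (dist x y) 0 R"
  proof -
    have "sph_dist \<kappa> R R = 0" using e kpos by (simp add: R_def sph_unit norm_eq_sqrt_inner)
    then show ?thesis using sph dRP by (simp add: cmp_point_def)
  qed
  have "dist (\<gamma> (t * dist y p)) (\<gamma>3 0) \<le> sph_dist \<kappa> ((1/k) *\<^sub>R V) R"
  proof -
    have m: "t*dist y p \<in> {0..dist y p}" using t by (auto simp: mult_left_le_one_le)
    show ?thesis by (rule H2[rule_format, OF m _ conjI[OF cv cw]]) simp
  qed
  also have "\<dots> = arccos (V \<bullet> eR) / k" using kpos by (simp add: R_def sph_unit)
  finally have le: "k * dist x (\<gamma> (t * dist y p)) \<le> arccos (V \<bullet> eR)"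
    using g3 kgt by (simp add: geodesic_path_def dist_commute field_simps)
  have vb: "\<bar>V \<bullet> eR\<bar> \<le> 1" using Cauchy_Schwarz_ineq2[of V eR] sl e by simp
  have "V \<bullet> eR \<le> cos (k * dist x (\<gamma> (t * dist y p)))"
  proof -
    have "cos (arccos (V \<bullet> eR)) \<le> cos (k * dist x (\<gamma> (t * dist y p)))"
      using le vb kd0 by (intro cos_monotone_0_pi_le) (auto simp: arccos_ubound abs_le_iff)
    then show ?thesis using vb by (simp add: arccos abs_le_iff)
  qed
  then show ?thesis using sl(4)[of eR] e sD by (simp add: D_def a_def b_def field_simps)
qed

end




lemma LIM:
  fixes D L \<alpha> \<beta> :: real
  assumes D: "D > 0" and H: "\<And>t. 0 < t \<Longrightarrow> t \<le> 1 \<Longrightarrow> L \<le> ((sin D - sin ((1-t)*D)) * \<alpha> - sin (t*D) * \<beta>) / t"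
  shows "L \<le> D * cos D * \<alpha> - D * \<beta>"
proof -
  have "((\<lambda>t. sin ((1-t)*D)) has_field_derivative cos ((1-0)*D) * (-D)) (at_right 0)"
    by (auto intro!: derivative_eq_intros)
  hence d1: "((\<lambda>t. (sin ((1-t)*D) - sin D) / t) \<longlongrightarrow> - D * cos D) (at_right 0)"
    by (simp add: has_field_derivative_iff mult.commute)
  have "((\<lambda>t. sin (t*D)) has_field_derivative cos (0*D) * D) (at_right 0)"
    by (auto intro!: derivative_eq_intros)
  hence d2: "((\<lambda>t. sin (t*D) / t) \<longlongrightarrow> D) (at_right 0)"
    by (simp add: has_field_derivative_iff mult.commute)
  have lim: "((\<lambda>t. - ((sin ((1-t)*D) - sin D) / t) * \<alpha> - (sin (t*D) / t) * \<beta>) \<longlongrightarrow> D * cos D * \<alpha> - D * \<beta>) (at_right 0)"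
    using tendsto_diff[OF tendsto_mult[OF tendsto_minus[OF d1] tendsto_const[of \<alpha>]] tendsto_mult[OF d2 tendsto_const[of \<beta>]]]
    by simp
  have ev: "eventually (\<lambda>t. L \<le> - ((sin ((1-t)*D) - sin D) / t) * \<alpha> - (sin (t*D) / t) * \<beta>) (at_right 0)"
  proof -
    have "eventually (\<lambda>t. t \<in> {0<..<1}) (at_right (0::real))"
      by (rule eventually_at_right_real) simp
    then show ?thesis
    proof (rule eventually_mono)
      fix t :: real assume t: "t \<in> {0<..<1}"
      have "L \<le> ((sin D - sin ((1-t)*D)) * \<alpha> - sin (t*D) * \<beta>) / t" using H t by auto
      also have "\<dots> = - ((sin ((1-t)*D) - sin D) / t) * \<alpha> - (sin (t*D) / t) * \<beta>"
        using t by (simp add: field_simps)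
      finally show "L \<le> \<dots>" .
    qed
  qed
  show ?thesis by (rule tendsto_lowerbound[OF lim ev]) simp
qed

lemma jordan3:
  fixes x :: real assumes "0 \<le> x" "x \<le> 2" shows "x \<le> 3 * sin x"
proof -
  have "\<bar>sin x - (\<Sum>m<3. sin_coeff m * x ^ m)\<bar> \<le> inverse (fact 3) * \<bar>x\<bar> ^ 3"
    by (rule Maclaurin_sin_bound)
  moreover have "(\<Sum>m<3. sin_coeff m * x ^ m) = x"
    by (simp add: numeral_3_eq_3 sin_coeff_def)
  moreover have "inverse (fact 3) * \<bar>x\<bar> ^ 3 = x^3 / 6"
  proof -
    have f3: "fact 3 = (6::real)" by (simp add: numeral_3_eq_3)
    have ax: "\<bar>x\<bar> = x" using assms by simp
    show ?thesis by (simp only: f3 ax) (simp add: field_simps)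
  qed
  ultimately have "\<bar>sin x - x\<bar> \<le> x^3 / 6" by simp
  hence "sin x \<ge> x - x^3/6" by linarith
  moreover have "x^3 \<le> 4 * x"
  proof -
    have "x * x \<le> 2 * 2" using assms by (intro mult_mono) auto
    hence "(x * x) * x \<le> 4 * x" using assms by (intro mult_right_mono) auto
    then show ?thesis by (simp add: power3_eq_cube)
  qed
  ultimately show ?thesis by linarith
qed

lemma sin_superadd:
  fixes \<alpha> \<beta> :: real assumes "0 \<le> \<alpha>" "0 \<le> \<beta>" "\<alpha> + \<beta> \<le> pi"
  shows "sin (\<alpha> + \<beta>) \<le> sin \<alpha> + sin \<beta>"
proof -
  have "sin \<alpha> \<ge> 0" "sin \<beta> \<ge> 0" using assms by (auto intro!: sin_ge_zero)
  moreover have "cos \<beta> \<le> 1" "cos \<alpha> \<le> 1" by auto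
  ultimately have "sin \<alpha> * cos \<beta> \<le> sin \<alpha> * 1" "cos \<alpha> * sin \<beta> \<le> 1 * sin \<beta>"
    by (intro mult_left_mono mult_right_mono; simp)+
  then show ?thesis by (simp add: sin_add)
qed

context smallcat
begin

lemma cos_le_iff: "cos (k * dist (a::'a) b) \<le> cos (k * dist (c::'a) d) \<longleftrightarrow> dist c d \<le> dist a b"
proof -
  have "cos (k * dist a b) \<le> cos (k * dist c d) \<longleftrightarrow> k * dist c d \<le> k * dist a b"
    using kd[of a b] kd[of c d] kd0[of a b] kd0[of c d] by (intro cos_mono_le_eq) auto
  then show ?thesis using kgt by simp
qed

lemma cos_pos: "cos (k * dist (a::'a) b) > 0"
  using kd[of a b] kd0[of a b] by (intro cos_gt_zero_pi) auto


lemma G3: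
  fixes x y p :: 'a
  assumes g: "geodesic_path \<gamma> y p"
    and near: "\<And>s. 0 \<le> s \<Longrightarrow> s \<le> dist y p \<Longrightarrow> dist x y \<le> dist x (\<gamma> s)"
  shows "cos (k * dist x p) \<le> cos (k * dist x y) * cos (k * dist y p)"
proof (cases "y = p")
  case True then show ?thesis by simp
next
  case False
  define D where "D = k * dist y p"
  have D0: "D > 0" using False kgt by (simp add: D_def)
  have "0 \<le> ((sin D - sin ((1-t)*D)) * cos (k * dist x y) - sin (t*D) * cos (k * dist x p)) / t"
    if t: "0 < t" "t \<le> 1" for t
  proof -
    have "sin ((1-t) * D) * cos (k * dist x y) + sin (t * D) * cos (k * dist x p)
       \<le> sin D * cos (k * dist x (\<gamma> (t * dist y p)))"
      using G2[OF g False, of t x] t by (simp add: D_def)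
    also have "\<dots> \<le> sin D * cos (k * dist x y)"
    proof (rule mult_left_mono)
      show "cos (k * dist x (\<gamma> (t * dist y p))) \<le> cos (k * dist x y)"
        using near[of "t * dist y p"] t by (simp add: cos_le_iff mult_left_le_one_le)
      show "0 \<le> sin D" using D0 kd[of y p] by (intro sin_ge_zero) (auto simp: D_def)
    qed
    finally show ?thesis using t by (simp add: algebra_simps)
  qed
  from LIM[OF D0, of 0, OF this]
  have "0 \<le> D * (cos D * cos (k * dist x y) - cos (k * dist x p))" by (simp add: algebra_simps)
  then show ?thesis using D0 by (simp add: zero_le_mult_iff D_def mult.commute)
qed

lemma G4:
  fixes x u v :: 'a
  assumes g: "geodesic_path \<gamma> u v"
  shows "cos (k * dist x u) + cos (k * dist x v) \<le> 2 * cos (k * dist u v / 2) * cos (k * dist x (\<gamma> (dist u v / 2)))"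
proof (cases "u = v")
  case True then show ?thesis using g by (simp add: geodesic_path_def)
next
  case False
  define D where "D = k * dist u v"
  have D0: "D > 0" using False kgt by (simp add: D_def)
  have s2: "sin (D/2) > 0" using D0 kd[of u v] by (intro sin_gt_zero) (auto simp: D_def)
  have "sin (D/2) * (cos (k * dist x u) + cos (k * dist x v)) \<le> sin D * cos (k * dist x (\<gamma> (1/2 * dist u v)))"
    using G2[OF g False, of "1/2" x] by (simp add: D_def algebra_simps)
  also have "sin D = sin (D/2) * (2 * cos (D/2))" using sin_double[of "D/2"] by simp
  finally show ?thesis using s2 by (simp add: D_def mult.assoc)
qed


lemma Psi_eq: "Psi \<kappa> x z = 1 / (\<kappa> * cos (k * dist x z)) - cos (k * dist x z) / \<kappa>"
  by (simp add: Psi_def dist_commute)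

lemma G5:
  fixes x y p :: 'a
  assumes g: "geodesic_path \<gamma> y p"
    and near: "\<And>s. 0 \<le> s \<Longrightarrow> s \<le> dist y p \<Longrightarrow> dist x y \<le> dist x (\<gamma> s)"
    and c0: "0 < c0" "c0 \<le> cos (k * dist x p)"
    and H: "\<And>t. 0 < t \<Longrightarrow> t \<le> 1 \<Longrightarrow> t * L \<le> Psi \<kappa> x (\<gamma> (t * dist y p)) - Psi \<kappa> x y"
  shows "\<kappa> * L \<le> 3 * (1 + 1/c0^2) * (cos (k * dist y p) - cos (k * dist x p))"
proof (cases "y = p")
  case True
  have "1 * L \<le> 0" using H[of 1] g True by (simp add: geodesic_path_def)
  moreover have "0 \<le> 3 * (1 + 1/c0^2) * (cos (k * dist y p) - cos (k * dist x p))"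
    using True by (intro mult_nonneg_nonneg) auto
  moreover have "\<kappa> * L \<le> 0" using kpos calculation by (simp add: mult_nonneg_nonpos)
  ultimately show ?thesis by linarith
next
  case False
  define ca where "ca = cos (k * dist x y)"
  define cb where "cb = cos (k * dist x p)"
  define D where "D = k * dist y p"
  define K where "K = 1 + 1/c0^2"
  have K0: "K > 0" using c0 by (simp add: K_def add_pos_nonneg)
  have D0: "D > 0" using False kgt by (simp add: D_def)
  have Dl: "D < pi/2" using kd by (simp add: D_def)
  have sD: "sin D > 0" using D0 Dl by (intro sin_gt_zero) auto
  have cD: "0 \<le> cos D" "cos D \<le> 1" using D0 Dl by (auto intro!: cos_ge_zero)
  have ca1: "ca \<le> 1" "0 < ca" using cos_pos by (auto simp: ca_def)
  have g3: "cb \<le> ca * cos D" using G3[OF g near] by (simp add: ca_def cb_def D_def)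
  have cab: "cb \<le> ca" using g3 ca1 cD by (smt (verit) mult_left_le)
  have main: "\<kappa> * L * sin D / K \<le> ((sin D - sin ((1-t)*D)) * ca - sin (t*D) * cb) / t"
    if t: "0 < t" "t \<le> 1" for t
  proof -
    define ct where "ct = cos (k * dist x (\<gamma> (t * dist y p)))"
    have g2: "sin ((1-t) * D) * ca + sin (t * D) * cb \<le> sin D * ct"
      using G2[OF g False, of t x] t by (simp add: D_def ca_def cb_def ct_def)
    have cta: "ct \<le> ca" using near[of "t * dist y p"] t
      by (simp add: ct_def ca_def cos_le_iff mult_left_le_one_le)
    have tD: "0 \<le> t * D" "0 \<le> (1-t) * D" "(1-t)*D + t*D = D" using t D0 by (auto simp: algebra_simps)
    have tD2: "t * D \<le> D" "(1-t) * D \<le> D" using t D0 by (simp_all add: mult_left_le_one_le)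
    have s1: "0 \<le> sin ((1-t)*D)" "0 \<le> sin (t*D)"
      using sin_ge_zero[of "(1-t)*D"] sin_ge_zero[of "t*D"] tD tD2 Dl by linarith+
    have "sin D \<le> sin ((1-t)*D) + sin (t*D)"
      using sin_superadd[of "(1-t)*D" "t*D"] tD Dl by simp
    hence "sin D * cb \<le> (sin ((1-t)*D) + sin (t*D)) * cb" using c0 by (intro mult_right_mono) (auto simp: cb_def)
    also have "\<dots> \<le> sin ((1-t) * D) * ca + sin (t * D) * cb"
      using s1 cab by (simp add: distrib_right mult_left_mono)
    also have "\<dots> \<le> sin D * ct" by (rule g2)
    finally have ctb: "cb \<le> ct" using sD by simp
    have ct0: "c0 \<le> ct" "c0 \<le> ca" using ctb cab c0 by (auto simp: cb_def)
    have "Psi \<kappa> x (\<gamma> (t * dist y p)) - Psi \<kappa> x y = (ca - ct) * (1 + 1/(ca*ct)) / \<kappa>"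
      using ct0 c0 kpos by (simp add: Psi_eq ca_def[symmetric] ct_def[symmetric] field_simps)
    hence eq: "\<kappa> * (Psi \<kappa> x (\<gamma> (t * dist y p)) - Psi \<kappa> x y) = (ca - ct) * (1 + 1/(ca*ct))"
      using kpos by simp
    have "\<kappa> * (t * L) \<le> \<kappa> * (Psi \<kappa> x (\<gamma> (t * dist y p)) - Psi \<kappa> x y)"
      using H[OF t] kpos by (intro mult_left_mono) auto
    hence "\<kappa> * (t * L) \<le> (ca - ct) * (1 + 1/(ca*ct))" using eq by simp
    also have "\<dots> \<le> (ca - ct) * K"
    proof (rule mult_left_mono)
      have "c0 * c0 \<le> ca * ct" using ct0 c0 by (intro mult_mono) auto
      hence "1/(ca*ct) \<le> 1/c0^2" using c0 by (simp add: power2_eq_square frac_le)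
      then show "1 + 1/(ca*ct) \<le> K" by (simp add: K_def)
    qed (use cta in simp)
    also have "\<dots> \<le> (ca - (sin ((1-t) * D) * ca + sin (t * D) * cb) / sin D) * K"
      using g2 sD K0 by (intro mult_right_mono) (auto simp: field_simps)
    finally have "\<kappa> * (t * L) \<le> (ca - (sin ((1-t) * D) * ca + sin (t * D) * cb) / sin D) * K" .
    then show ?thesis using t sD K0 by (simp add: field_simps)
  qed
  have lim: "\<kappa> * L * sin D / K \<le> D * cos D * ca - D * cb" by (rule LIM[OF D0 main])
  have "D * cos D * ca - D * cb = D * (cos D * ca - cb)" by (simp add: algebra_simps)
  also have "\<dots> \<le> (3 * sin D) * (cos D * ca - cb)"
    using jordan3[of D] D0 Dl g3 pi_half_less_two by (intro mult_right_mono) (auto simp: mult.commute)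
  also have "\<dots> \<le> (3 * sin D) * (cos D - cb)"
    using sD ca1 cD by (intro mult_left_mono) (auto simp: mult_left_le)
  finally have "\<kappa> * L * sin D / K \<le> (3 * sin D) * (cos D - cb)" using lim by linarith
  moreover have "\<kappa> * L * sin D / K = (\<kappa> * L / K) * sin D" by simp
  moreover have "(3 * sin D) * (cos D - cb) = (3 * (cos D - cb)) * sin D" by simp
  ultimately have "(\<kappa> * L / K) * sin D \<le> (3 * (cos D - cb)) * sin D" by linarith
  hence "\<kappa> * L / K \<le> 3 * (cos D - cb)" using sD by (simp only: mult_le_cancel_right_pos)
  hence "\<kappa> * L \<le> K * (3 * (cos D - cb))" using K0 by (simp add: divide_le_eq mult.commute)
  then show ?thesis by (simp add: K_def D_def cb_def algebra_simps)
qed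


lemma ME:
  fixes S :: "'a set" and \<psi> :: "'a \<Rightarrow> real"
  assumes compl: "complete (UNIV::'a set)"
    and S: "closed S"
    and mid: "\<And>u v \<gamma>. u\<in>S \<Longrightarrow> v\<in>S \<Longrightarrow> geodesic_path \<gamma> u v \<Longrightarrow> \<gamma> (dist u v/2) \<in> S"
    and \<psi>1: "\<And>w. \<psi> w \<le> 1"
    and \<psi>c: "continuous_on UNIV \<psi>"
    and pos: "w0 \<in> S" "\<psi> w0 > 0"
    and ineq: "\<And>u v \<gamma>. u\<in>S \<Longrightarrow> v\<in>S \<Longrightarrow> geodesic_path \<gamma> u v \<Longrightarrow>
        \<psi> u + \<psi> v \<le> 2 * cos (k * dist u v / 2) * \<psi> (\<gamma> (dist u v/2))"
  shows "\<exists>u\<in>S. \<forall>w\<in>S. \<psi> w \<le> \<psi> u"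
proof -
  define c where "c = Sup (\<psi> ` S)"
  have bdd: "bdd_above (\<psi> ` S)" using \<psi>1 by (intro bdd_aboveI[where M=1]) auto
  have ne: "\<psi> ` S \<noteq> {}" using pos by auto
  have le_c: "\<psi> w \<le> c" if "w \<in> S" for w using bdd that by (auto simp: c_def intro: cSUP_upper)
  have c0: "c > 0" using le_c[OF pos(1)] pos by simp
  have "\<exists>w\<in>S. c - 1/(real j + 1) < \<psi> w" for j
  proof -
    have "c - 1/(real j + 1) < c" by simp
    then show ?thesis unfolding c_def using ne by (subst (asm) less_cSUP_iff[OF _ bdd]) auto
  qed
  then obtain w where wS: "\<And>j. w j \<in> S" and wc: "\<And>j. c - 1/(real j + 1) < \<psi> (w j)" by metis
  have cauchy: "Cauchy w"
  proof (rule metric_CauchyI)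
    fix e :: real assume e: "e > 0"
    define e' where "e' = min e (pi / (2*k))"
    have e'0: "e' > 0" using e kgt by (simp add: e'_def)
    define q where "q = cos (k * e' / 2)"
    have q1: "q < 1"
    proof -
      have "k * e' / 2 > 0" using e'0 kgt by simp
      moreover have "k * e' / 2 \<le> pi/4" using kgt by (simp add: e'_def min_def field_simps)
      moreover have "k * e' / 2 \<le> pi" using calculation(2) pi_gt_zero by linarith
      ultimately have "cos (k * e' / 2) < cos 0" by (intro cos_monotone_0_pi) auto
      then show ?thesis by (simp add: q_def)
    qed
    obtain N :: nat where N: "1 / (real N + 1) < c * (1 - q) / 2"
    proof -
      have "c * (1 - q) / 2 > 0" using c0 q1 by simp
      then obtain N :: nat where "inverse (real (Suc N)) < c * (1 - q) / 2" using reals_Archimedean by blast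
      moreover have "1/(real N + 1) = inverse (real (Suc N))" by (simp add: inverse_eq_divide)
      ultimately show ?thesis using that[of N] by simp
    qed
    show "\<exists>M. \<forall>m\<ge>M. \<forall>n\<ge>M. dist (w m) (w n) < e"
    proof (intro exI allI impI)
      fix m n assume mn: "N \<le> m" "N \<le> n"
      show "dist (w m) (w n) < e"
      proof (rule ccontr)
        assume "\<not> dist (w m) (w n) < e"
        hence de: "e' \<le> dist (w m) (w n)" by (simp add: e'_def)
        obtain \<gamma> where g: "geodesic_path \<gamma> (w m) (w n)" using geo_ex by blast
        have "1 / (real m + 1) \<le> 1 / (real N + 1)" using mn by (simp add: frac_le)
        hence am: "c - c * (1 - q) / 2 < \<psi> (w m)" using wc[of m] N by linarith
        have "1 / (real n + 1) \<le> 1 / (real N + 1)" using mn by (simp add: frac_le)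
        hence an: "c - c * (1 - q) / 2 < \<psi> (w n)" using wc[of n] N by linarith
        have cq: "cos (k * dist (w m) (w n) / 2) \<le> q"
        proof -
          have "k * dist (w m) (w n) / 2 \<le> pi" using kd[of "w m" "w n"] pi_gt_zero by linarith
          then show ?thesis
          unfolding q_def using de kgt e'0
          by (intro cos_monotone_0_pi_le) (auto simp: divide_right_mono)
        qed
        have cq0: "0 \<le> cos (k * dist (w m) (w n) / 2)"
          using kd[of "w m" "w n"] kd0[of "w m" "w n"] by (intro cos_ge_zero) auto
        have "\<psi> (w m) + \<psi> (w n) \<le> 2 * cos (k * dist (w m) (w n) / 2) * \<psi> (\<gamma> (dist (w m) (w n)/2))"
          using ineq[OF wS wS g] .
        also have "\<dots> \<le> 2 * cos (k * dist (w m) (w n) / 2) * c"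
          using cq0 le_c[OF mid[OF wS wS g]] by (intro mult_left_mono) auto
        also have "\<dots> \<le> 2 * q * c"
          using cq c0 by (intro mult_right_mono) auto
        finally have "2*c - c*(1-q) < 2 * q * c" using am an by linarith
        hence "c * (1 - q) < 0" by (simp add: algebra_simps)
        then show False using c0 q1 by (simp add: mult_less_0_iff)
      qed
    qed
  qed
  obtain u where u: "w \<longlonglongrightarrow> u" using compl cauchy unfolding complete_def by blast
  have uS: "u \<in> S" using S wS u closed_sequentially by blast
  have lim1: "(\<lambda>j. \<psi> (w j)) \<longlonglongrightarrow> \<psi> u"
    using \<psi>c u by (metis continuous_on_tendsto_compose UNIV_I eventually_sequentially)
  have lim2: "(\<lambda>j. \<psi> (w j)) \<longlonglongrightarrow> c"
  proof (rule tendsto_sandwich[of "\<lambda>j. c - 1/(real j + 1)" _ _ "\<lambda>j. c"])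
    show "\<forall>\<^sub>F j in sequentially. c - 1/(real j + 1) \<le> \<psi> (w j)" using wc by (simp add: less_imp_le)
    show "\<forall>\<^sub>F j in sequentially. \<psi> (w j) \<le> c" using le_c wS by simp
    show "(\<lambda>j. c - 1/(real j + 1)) \<longlonglongrightarrow> c"
    proof -
      have "(\<lambda>j. c - inverse (real j + 1)) \<longlonglongrightarrow> c - 0"
        using tendsto_diff[OF tendsto_const[of c] LIMSEQ_inverse_real_of_nat] by (simp add: add.commute)
      then show ?thesis by (simp add: inverse_eq_divide)
    qed
  qed simp
  have "\<psi> u = c" using LIMSEQ_unique[OF lim1 lim2] .
  then show ?thesis using uS le_c by auto
qed

lemma ME_uniq:
  fixes S :: "'a set" and \<psi> :: "'a \<Rightarrow> real"
  assumes mid: "\<And>u v \<gamma>. u\<in>S \<Longrightarrow> v\<in>S \<Longrightarrow> geodesic_path \<gamma> u v \<Longrightarrow> \<gamma> (dist u v/2) \<in> S"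
    and ineq: "\<And>u v \<gamma>. u\<in>S \<Longrightarrow> v\<in>S \<Longrightarrow> geodesic_path \<gamma> u v \<Longrightarrow>
        \<psi> u + \<psi> v \<le> 2 * cos (k * dist u v / 2) * \<psi> (\<gamma> (dist u v/2))"
    and u: "u \<in> S" "\<forall>w\<in>S. \<psi> w \<le> \<psi> u" and v: "v \<in> S" "\<forall>w\<in>S. \<psi> w \<le> \<psi> v"
    and pos: "\<psi> u > 0"
  shows "u = v"
proof (rule ccontr)
  assume uv: "u \<noteq> v"
  obtain \<gamma> where g: "geodesic_path \<gamma> u v" using geo_ex by blast
  have eq: "\<psi> v = \<psi> u" using u v by (simp add: order_antisym)
  have cq: "cos (k * dist u v / 2) < 1"
  proof -
    have "k * dist u v / 2 \<le> pi" using kd[of u v] pi_gt_zero by linarith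
    then have "cos (k * dist u v / 2) < cos 0"
      using uv kgt by (intro cos_monotone_0_pi) auto
    then show ?thesis by simp
  qed
  have cq0: "0 \<le> cos (k * dist u v / 2)"
    using kd[of u v] kd0[of u v] by (intro cos_ge_zero) auto
  have "2 * \<psi> u \<le> 2 * cos (k * dist u v / 2) * \<psi> (\<gamma> (dist u v/2))"
    using ineq[OF u(1) v(1) g] eq by simp
  also have "\<dots> \<le> 2 * cos (k * dist u v / 2) * \<psi> u"
    using u(2) mid[OF u(1) v(1) g] cq0 by (intro mult_left_mono) auto
  also have "\<dots> < 2 * \<psi> u" using cq pos by simp
  finally show False by simp
qed

end




lemma cos_lip: fixes x y :: real shows "\<bar>cos x - cos y\<bar> \<le> \<bar>x - y\<bar>"
proof -
  have *: "\<bar>cos x - cos y\<bar> \<le> \<bar>x - y\<bar>" if xy: "x < y" for x y :: real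
  proof -
    obtain z where "cos y - cos x = (y - x) * - sin z"
      using MVT2[OF xy, of cos "\<lambda>z. - sin z"] by (auto intro: derivative_eq_intros)
    then have "cos x - cos y = (y - x) * sin z" by (simp add: algebra_simps)
    then have "\<bar>cos x - cos y\<bar> = (y - x) * \<bar>sin z\<bar>" using xy by (simp add: abs_mult)
    also have "\<dots> \<le> (y - x) * 1" using xy by (intro mult_left_mono) auto
    finally show ?thesis using xy by simp
  qed
  show ?thesis
    by (cases x y rule: linorder_cases) (use *[of x y] *[of y x] in \<open>auto simp: abs_minus_commute\<close>)
qed

lemma cos_approx:
  fixes a b e :: real
  assumes "0 \<le> a" "a \<le> pi" "0 \<le> b" "b \<le> pi" "a < b + e" "0 \<le> e"
  shows "cos b - e \<le> cos a"
proof (cases "a \<le> b")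
  case True then have "cos b \<le> cos a" using assms by (intro cos_monotone_0_pi_le) auto
  then show ?thesis using assms by linarith
next
  case False
  have "\<bar>cos a - cos b\<bar> \<le> \<bar>a - b\<bar>" by (rule cos_lip)
  then show ?thesis using False assms by linarith
qed

lemma freq_ev: "frequently P F \<Longrightarrow> eventually Q F \<Longrightarrow> frequently (\<lambda>x. P x \<and> Q x) F"
  by (erule frequently_rev_mp) (auto elim: eventually_mono)

definition Rr :: "(nat \<Rightarrow> 'a::metric_space) \<Rightarrow> 'a \<Rightarrow> real" where
  "Rr s u = real_of_ereal (asym_r u s)"

context smallcat
begin

lemma
  fixes s :: "nat \<Rightarrow> 'a" and u v :: 'a
  shows R_eq: "asym_r u s = ereal (Rr s u)" and R_bnd: "0 \<le> Rr s u" "k * Rr s u \<le> pi/2"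
proof -
  define B where "B = pi / (2*k)"
  have up: "asym_r u s \<le> ereal B"
    unfolding asym_r_def by (intro Limsup_bounded always_eventually) (simp add: B_def less_imp_le[OF diam])
  have lo: "0 \<le> asym_r u s"
    unfolding asym_r_def by (intro le_Limsup) auto
  from up lo obtain r where r: "asym_r u s = ereal r" by (cases "asym_r u s") auto
  then show "asym_r u s = ereal (Rr s u)" by (simp add: Rr_def)
  show "0 \<le> Rr s u" using lo r by (simp add: Rr_def)
  have "Rr s u \<le> B" using up r by (simp add: Rr_def)
  then show "k * Rr s u \<le> pi/2" using kgt by (simp add: B_def field_simps)
qed

lemma R_ev:
  fixes s :: "nat \<Rightarrow> 'a" and u v :: 'a
  shows "e > 0 \<Longrightarrow> eventually (\<lambda>n. dist u (s n) < Rr s u + e) sequentially"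
proof -
  assume e: "e > 0"
  have "asym_r u s < ereal (Rr s u + e)" using e by (simp add: R_eq)
  then have "eventually (\<lambda>n. ereal (dist u (s n)) < ereal (Rr s u + e)) sequentially"
    unfolding asym_r_def by (rule Limsup_lessD)
  then show ?thesis by simp
qed

lemma R_freq:
  fixes s :: "nat \<Rightarrow> 'a" and u v :: 'a
  shows "e > 0 \<Longrightarrow> frequently (\<lambda>n. dist u (s n) > Rr s u - e) sequentially"
proof (rule ccontr)
  assume e: "e > 0" and nf: "\<not> frequently (\<lambda>n. dist u (s n) > Rr s u - e) sequentially"
  hence "eventually (\<lambda>n. ereal (dist u (s n)) \<le> ereal (Rr s u - e)) sequentially"
    by (simp add: not_frequently not_less)
  hence "asym_r u s \<le> ereal (Rr s u - e)" unfolding asym_r_def by (rule Limsup_bounded)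
  then show False using e by (simp add: R_eq)
qed

lemma R_leI:
  fixes s :: "nat \<Rightarrow> 'a" and u v :: 'a
 
  assumes "\<And>e. e > 0 \<Longrightarrow> eventually (\<lambda>n. dist u (s n) < r + e) sequentially"
  shows "Rr s u \<le> r"
proof (rule field_le_epsilon)
  fix e :: real assume e: "e > 0"
  have "eventually (\<lambda>n. ereal (dist u (s n)) \<le> ereal (r + e)) sequentially"
    using assms[OF e] by (auto elim: eventually_mono)
  hence "asym_r u s \<le> ereal (r + e)" unfolding asym_r_def by (rule Limsup_bounded)
  then show "Rr s u \<le> r + e" by (simp add: R_eq)
qed

lemma R_geI:
  fixes s :: "nat \<Rightarrow> 'a" and u v :: 'a
 
  assumes "\<And>e. e > 0 \<Longrightarrow> frequently (\<lambda>n. dist u (s n) > r - e) sequentially"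
  shows "r \<le> Rr s u"
proof (rule ccontr)
  assume "\<not> r \<le> Rr s u"
  define e where "e = (r - Rr s u) / 2"
  have e: "e > 0" using \<open>\<not> r \<le> Rr s u\<close> by (simp add: e_def)
  have "eventually (\<lambda>n. dist u (s n) < Rr s u + e) sequentially" by (rule R_ev[OF e])
  moreover have "frequently (\<lambda>n. dist u (s n) > r - e) sequentially" by (rule assms[OF e])
  ultimately have "frequently (\<lambda>n. r - e < dist u (s n) \<and> dist u (s n) < Rr s u + e) sequentially"
    using freq_ev by blast
  then have "frequently (\<lambda>n. False) sequentially"
  proof (rule frequently_elim1)
    have ee: "Rr s u + e = r - e" by (simp add: e_def field_simps)
    show "r - e < dist u (s i) \<and> dist u (s i) < Rr s u + e \<Longrightarrow> False" for i using ee by linarith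
  qed
  then show False by simp
qed

lemma R_mono:
  fixes s :: "nat \<Rightarrow> 'a" and u v :: 'a
 
  assumes "eventually (\<lambda>n. dist v (s n) \<le> dist u (s n)) sequentially"
  shows "Rr s v \<le> Rr s u"
proof (rule R_leI)
  fix e :: real assume e: "e > 0"
  show "eventually (\<lambda>n. dist v (s n) < Rr s u + e) sequentially"
    using eventually_conj[OF assms R_ev[OF e, where u=u and s=s]] by (auto elim: eventually_mono)
qed

lemma R_lip:
  fixes s :: "nat \<Rightarrow> 'a" and u v :: 'a
  shows "Rr s v \<le> Rr s u + dist u v"
proof (rule R_leI)
  fix e :: real assume e: "e > 0"
  show "eventually (\<lambda>n. dist v (s n) < Rr s u + dist u v + e) sequentially"
    using R_ev[OF e, where u=u and s=s]
  proof (rule eventually_mono)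
    fix n assume "dist u (s n) < Rr s u + e"
    moreover have "dist v (s n) \<le> dist u v + dist u (s n)" by (metis dist_commute dist_triangle)
    ultimately show "dist v (s n) < Rr s u + dist u v + e" by linarith
  qed
qed

lemma R_cont:
  fixes s :: "nat \<Rightarrow> 'a" and u v :: 'a
  shows "continuous_on UNIV (\<lambda>u. cos (k * Rr s u))"
proof -
  have "continuous_on UNIV (Rr s)"
    unfolding continuous_on_iff
  proof (intro ballI allI impI)
    fix x e assume "(e::real) > 0"
    then show "\<exists>d>0. \<forall>x'\<in>UNIV. dist x' x < d \<longrightarrow> dist (Rr s x') (Rr s x) < e"
    proof (intro exI[of _ e] conjI ballI impI)
      fix x' assume "dist x' x < e"
      moreover have "Rr s x' \<le> Rr s x + dist x x'" "Rr s x \<le> Rr s x' + dist x' x" by (rule R_lip)+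
      ultimately show "dist (Rr s x') (Rr s x) < e" by (simp add: dist_real_def dist_commute abs_less_iff)
    qed simp
  qed
  then show ?thesis by (intro continuous_intros)
qed

lemma R_lim:
  fixes s :: "nat \<Rightarrow> 'a" and u v :: 'a
 
  assumes "(\<lambda>n. dist u (s n)) \<longlonglongrightarrow> L"
  shows "Rr s u = L"
proof -
  have "(\<lambda>n. ereal (dist u (s n))) \<longlonglongrightarrow> ereal L" using assms by (simp add: tendsto_ereal)
  hence "asym_r u s = ereal L" unfolding asym_r_def by (intro lim_imp_Limsup) auto
  then show ?thesis by (simp add: R_eq)
qed

lemma R_mid:
  fixes s :: "nat \<Rightarrow> 'a" and u v :: 'a
 
  assumes g: "geodesic_path \<gamma> u v"
  shows "cos (k * Rr s u) + cos (k * Rr s v) \<le> 2 * cos (k * dist u v / 2) * cos (k * Rr s (\<gamma> (dist u v / 2)))"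
proof -
  define m where "m = \<gamma> (dist u v / 2)"
  define C where "C = cos (k * dist u v / 2)"
  have C: "0 \<le> C" "C \<le> 1" using kd[of u v] kd0[of u v] by (auto simp: C_def intro!: cos_ge_zero)
  have key: "cos (k * Rr s u) + cos (k * Rr s v) \<le> 2 * C * cos (k * Rr s m) + (2*k*e + 2*k*e)" if e: "e > 0" for e
  proof -
    have "frequently (\<lambda>n. (dist u (s n) < Rr s u + e \<and> dist v (s n) < Rr s v + e) \<and> dist m (s n) > Rr s m - e) sequentially"
      using freq_ev[OF R_freq[OF e, where u=m and s=s] eventually_conj[OF R_ev[OF e, where u=u and s=s] R_ev[OF e, where u=v and s=s]]]
      by (rule frequently_elim1) auto
    then obtain n where n: "dist u (s n) < Rr s u + e" "dist v (s n) < Rr s v + e" "dist m (s n) > Rr s m - e"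
      by (auto dest: frequently_ex)
    have bnds: "\<And>w. 0 \<le> k * dist w (s n)" "\<And>w. k * dist w (s n) \<le> pi" "\<And>w. 0 \<le> k * Rr s w" "\<And>w. k * Rr s w \<le> pi"
    proof -
      fix w show "0 \<le> k * dist w (s n)" by (rule kd0)
      show "k * dist w (s n) \<le> pi" using kd[of w "s n"] pi_gt_zero by linarith
      show "0 \<le> k * Rr s w" using kgt R_bnd(1)[of s w] by simp
      show "k * Rr s w \<le> pi" using R_bnd(2)[of s w] pi_gt_zero by linarith
    qed
    have ke: "0 \<le> k * e" using kgt e by simp
    have "cos (k * Rr s u) - k*e \<le> cos (k * dist u (s n))"
      using n(1) kgt e ke by (intro cos_approx bnds) (simp add: distrib_left[symmetric])
    moreover have "cos (k * Rr s v) - k*e \<le> cos (k * dist v (s n))"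
      using n(2) kgt e ke by (intro cos_approx bnds) (simp add: distrib_left[symmetric])
    moreover have "cos (k * dist m (s n)) - k*e \<le> cos (k * Rr s m)"
      using n(3) kgt e ke by (intro cos_approx bnds) (simp add: distrib_left[symmetric])
    moreover have "cos (k * dist u (s n)) + cos (k * dist v (s n)) \<le> 2 * C * cos (k * dist m (s n))"
      using G4[OF g, of "s n"] by (simp add: C_def m_def dist_commute)
    moreover have "2 * C * cos (k * dist m (s n)) \<le> 2 * C * (cos (k * Rr s m) + k*e)"
      using calculation(3) C by (intro mult_left_mono) auto
    moreover have "2 * C * (cos (k * Rr s m) + k*e) \<le> 2 * C * cos (k * Rr s m) + 2*k*e"
      using C kgt e by (simp add: distrib_left mult_left_le)
    ultimately show ?thesis by linarith
  qed
  hence "cos (k * Rr s u) + cos (k * Rr s v) \<le> 2 * C * cos (k * Rr s m) + e" if "e > 0" for e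
    using key[of "e/(4*k)"] kgt that by (simp add: field_simps)
  then show ?thesis unfolding C_def m_def by (rule field_le_epsilon)
qed

end




context smallcat
begin

lemma Psi_self: "Psi \<kappa> (X::'a) X = 0" by (simp add: Psi_def)

lemma Psi_nonneg: "0 \<le> Psi \<kappa> (X::'a) y"
proof -
  define c where "c = cos (k * dist X y)"
  have c: "0 < c" "c \<le> 1" using cos_pos[of X y] by (auto simp: c_def)
  have "c / \<kappa> \<le> 1 / \<kappa>" using c kpos by (simp add: divide_right_mono)
  also have "1 / \<kappa> \<le> 1 / (\<kappa> * c)" using c kpos by (intro divide_left_mono) (auto simp: mult_left_le)
  finally show ?thesis by (simp add: Psi_eq c_def)
qed

lemma Psi_mono: "Psi \<kappa> (X::'a) y \<le> Psi \<kappa> X z \<Longrightarrow> dist X y \<le> dist X z"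
proof (rule ccontr)
  assume le: "Psi \<kappa> X y \<le> Psi \<kappa> X z" and "\<not> dist X y \<le> dist X z"
  hence lt: "dist X z < dist X y" by simp
  define cy where "cy = cos (k * dist X y)"
  define cz where "cz = cos (k * dist X z)"
  have c: "0 < cy" "0 < cz" using cos_pos by (auto simp: cy_def cz_def)
  have "cy \<le> cz" using lt by (simp add: cy_def cz_def cos_le_iff)
  moreover have "cy \<noteq> cz"
  proof
    assume "cy = cz"
    hence "cos (k * dist X y) \<le> cos (k * dist X z)" "cos (k * dist X z) \<le> cos (k * dist X y)"
      by (simp_all add: cy_def cz_def)
    then show False using lt by (simp add: cos_le_iff)
  qed
  ultimately have lt2: "cy < cz" by simp
  have "1 / (\<kappa> * cz) < 1 / (\<kappa> * cy)" using lt2 c kpos by (intro divide_strict_left_mono) auto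
  moreover have "cy / \<kappa> < cz / \<kappa>" using lt2 kpos by (simp add: divide_strict_right_mono)
  ultimately have "Psi \<kappa> X z < Psi \<kappa> X y" by (simp add: Psi_eq cy_def cz_def)
  then show False using le by simp
qed

end

locale ppa = smallcat \<kappa> ty for \<kappa> and ty :: "'a::metric_space itself" +
  fixes f :: "'a \<Rightarrow> ereal" and lam :: "nat \<Rightarrow> real" and xs :: "nat \<Rightarrow> 'a"
  assumes compl: "complete (UNIV::'a set)"
   and proper: "proper_fun f" and conv: "geod_convex_fun f" and lsc: "lsc_fun f"
   and hasmin: "\<exists>m. \<forall>y. f m \<le> f y"
   and lampos: "\<forall>n. lam n > 0" and nsum: "\<not> summable lam"
   and res: "\<forall>n. xs (Suc n) \<in> resolvent_set \<kappa> f (lam n) (xs n)"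
begin

definition "Fm = {m. \<forall>y. f m \<le> f y}"

lemma fin: "f w \<noteq> \<infinity> \<Longrightarrow> \<exists>b. f w = ereal b"
  using proper by (cases "f w") (auto simp: proper_fun_def)

lemma fstar: obtains p fs where "p \<in> Fm" "\<And>m. m \<in> Fm \<Longrightarrow> f m = ereal fs"
proof -
  obtain p where p: "\<forall>y. f p \<le> f y" using hasmin by blast
  obtain z where "f z \<noteq> \<infinity>" using proper by (auto simp: proper_fun_def)
  hence "f p \<noteq> \<infinity>" using p[rule_format, of z] by auto
  then obtain fs where fs: "f p = ereal fs" using fin by blast
  have fm: "f m = ereal fs" if "m \<in> Fm" for m
  proof -
    have "f m \<le> f p" "f p \<le> f m" using that p by (auto simp: Fm_def)
    then show ?thesis using fs by simp
  qed
  have pF: "p \<in> Fm" using p by (simp add: Fm_def)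
  show ?thesis by (rule that[OF pF fm])
qed

lemma resI: "f (xs (Suc n)) + ereal (Psi \<kappa> (xs n) (xs (Suc n)) / lam n) \<le> f z + ereal (Psi \<kappa> (xs n) z / lam n)"
  using res by (auto simp: resolvent_set_def)

lemma fin_seq: obtains b where "f (xs (Suc n)) = ereal b"
proof -
  obtain p fs where p: "p \<in> Fm" "f p = ereal fs" using fstar by metis
  have "f (xs (Suc n)) + ereal (Psi \<kappa> (xs n) (xs (Suc n)) / lam n) \<le> ereal (fs + Psi \<kappa> (xs n) p / lam n)"
    using resI[of n p] p by simp
  hence "f (xs (Suc n)) \<noteq> \<infinity>" by auto
  then show ?thesis using fin that by blast
qed

lemma resR:
  assumes "f (xs (Suc n)) = ereal b" "f z = ereal a"
  shows "b + Psi \<kappa> (xs n) (xs (Suc n)) / lam n \<le> a + Psi \<kappa> (xs n) z / lam n"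
  using resI[of n z] assms by simp

lemma conv_real:
  assumes g: "geodesic_path \<gamma> u v" and t: "0 \<le> t" "t \<le> 1" and fu: "f u = ereal b" and fv: "f v = ereal a"
  obtains c where "f (\<gamma> (t * dist u v)) = ereal c" "c \<le> (1-t)*b + t*a"
proof -
  have "f (\<gamma> (t * dist u v)) \<le> ereal (1 - t) * f u + ereal t * f v"
    using conv g t unfolding geod_convex_fun_def by auto
  also have "\<dots> = ereal ((1-t)*b + t*a)" by (simp add: fu fv)
  finally have le: "f (\<gamma> (t * dist u v)) \<le> ereal ((1-t)*b + t*a)" .
  hence "f (\<gamma> (t * dist u v)) \<noteq> \<infinity>" by auto
  then obtain c where c: "f (\<gamma> (t * dist u v)) = ereal c" using fin by blast
  show ?thesis using that[OF c] le c by simp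
qed


definition "pm = (SOME p. p \<in> Fm)"
definition "fsv = real_of_ereal (f pm)"
definition "fr n = real_of_ereal (f (xs (Suc n)))"

lemma pm_Fm: "pm \<in> Fm" and f_Fm: "m \<in> Fm \<Longrightarrow> f m = ereal fsv"
proof -
  obtain p fs where p: "p \<in> Fm" "\<And>m. m \<in> Fm \<Longrightarrow> f m = ereal fs" using fstar by metis
  show pm: "pm \<in> Fm" unfolding pm_def using p(1) by (rule someI)
  have "fsv = fs" using p(2)[OF pm] by (simp add: fsv_def)
  then show "m \<in> Fm \<Longrightarrow> f m = ereal fsv" using p(2) by simp
qed

lemma fr: "f (xs (Suc n)) = ereal (fr n)"
  using fin_seq[of n] by (metis fr_def real_of_ereal.simps(1))

lemma Fm_le: "m \<in> Fm \<Longrightarrow> fsv \<le> fr n"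
proof -
  assume m: "m \<in> Fm"
  hence "ereal fsv \<le> f (xs (Suc n))" using f_Fm[OF m] by (auto simp: Fm_def)
  then show ?thesis using fr[of n] by simp
qed

lemma near:
  assumes m: "m \<in> Fm" and g: "geodesic_path \<gamma> (xs (Suc n)) m" and s: "0 \<le> s" "s \<le> dist (xs (Suc n)) m"
  shows "dist (xs n) (xs (Suc n)) \<le> dist (xs n) (\<gamma> s)"
proof (cases "dist (xs (Suc n)) m = 0")
  case True
  then have "s = 0" using s by simp
  then show ?thesis using g by (simp add: geodesic_path_def)
next
  case False
  define d where "d = dist (xs (Suc n)) m"
  define t where "t = s / d"
  have d0: "d > 0" using False by (simp add: d_def)
  have t: "0 \<le> t" "t \<le> 1" "s = t * d" using s d0 by (auto simp: t_def d_def)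
  obtain c where c: "f (\<gamma> (t * d)) = ereal c" "c \<le> (1-t) * fr n + t * fsv"
    using conv_real[OF g t(1,2) fr f_Fm[OF m]] by (metis d_def)
  have "(1-t) * fr n + t * fsv \<le> (1-t) * fr n + t * fr n"
    using Fm_le[OF m, of n] t by (intro add_left_mono mult_left_mono) auto
  hence cb: "c \<le> fr n" using c by (simp add: algebra_simps)
  have "fr n + Psi \<kappa> (xs n) (xs (Suc n)) / lam n \<le> c + Psi \<kappa> (xs n) (\<gamma> (t*d)) / lam n"
    by (rule resR[OF fr c(1)])
  hence "Psi \<kappa> (xs n) (xs (Suc n)) / lam n \<le> Psi \<kappa> (xs n) (\<gamma> (t*d)) / lam n" using cb by linarith
  hence "Psi \<kappa> (xs n) (xs (Suc n)) \<le> Psi \<kappa> (xs n) (\<gamma> (t*d))"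
    using lampos by (simp add: divide_le_cancel)
  then show ?thesis using Psi_mono t(3) by simp
qed

lemma fejer: assumes m: "m \<in> Fm" shows "dist (xs (Suc n)) m \<le> dist (xs n) m"
proof -
  obtain \<gamma> where g: "geodesic_path \<gamma> (xs (Suc n)) m" using geo_ex by blast
  have "cos (k * dist (xs n) m) \<le> cos (k * dist (xs n) (xs (Suc n))) * cos (k * dist (xs (Suc n)) m)"
    using G3[OF g, of "xs n"] near[OF m g] by simp
  also have "\<dots> \<le> 1 * cos (k * dist (xs (Suc n)) m)"
    using cos_pos[of "xs (Suc n)" m] by (intro mult_right_mono) auto
  finally show ?thesis by (simp add: cos_le_iff)
qed

lemma fejer0: "m \<in> Fm \<Longrightarrow> dist (xs n) m \<le> dist (xs 0) m"
  by (induction n) (auto intro: order_trans[OF fejer])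

lemma fejer_dec: "m \<in> Fm \<Longrightarrow> decseq (\<lambda>n. dist (xs n) m)"
  by (intro decseq_SucI fejer)

definition "c0 = cos (k * dist (xs 0) pm)"
definition "KK = 3 * (1 + 1/c0^2)"

lemma c0: "c0 > 0" by (simp add: c0_def cos_pos)

lemma estimate:
  "\<kappa> * (lam n * (fr n - fsv)) \<le> KK * (cos (k * dist (xs (Suc n)) pm) - cos (k * dist (xs n) pm))"
proof -
  obtain \<gamma> where g: "geodesic_path \<gamma> (xs (Suc n)) pm" using geo_ex by blast
  have c0le: "c0 \<le> cos (k * dist (xs n) pm)"
    using fejer0[OF pm_Fm, of n] by (simp add: c0_def cos_le_iff)
  have H: "t * (lam n * (fr n - fsv)) \<le> Psi \<kappa> (xs n) (\<gamma> (t * dist (xs (Suc n)) pm)) - Psi \<kappa> (xs n) (xs (Suc n))"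
    if t: "0 < t" "t \<le> 1" for t
  proof -
    obtain c where c: "f (\<gamma> (t * dist (xs (Suc n)) pm)) = ereal c" "c \<le> (1-t) * fr n + t * fsv"
      using conv_real[OF g _ t(2) fr f_Fm[OF pm_Fm]] t by auto
    have "fr n + Psi \<kappa> (xs n) (xs (Suc n)) / lam n \<le> c + Psi \<kappa> (xs n) (\<gamma> (t * dist (xs (Suc n)) pm)) / lam n"
      by (rule resR[OF fr c(1)])
    hence "t * (fr n - fsv) \<le> (Psi \<kappa> (xs n) (\<gamma> (t * dist (xs (Suc n)) pm)) - Psi \<kappa> (xs n) (xs (Suc n))) / lam n"
      using c(2) by (simp add: diff_divide_distrib algebra_simps)
    hence "lam n * (t * (fr n - fsv)) \<le> Psi \<kappa> (xs n) (\<gamma> (t * dist (xs (Suc n)) pm)) - Psi \<kappa> (xs n) (xs (Suc n))"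
      using lampos by (simp add: le_divide_eq mult.commute)
    then show ?thesis by (simp add: algebra_simps)
  qed
  have "\<kappa> * (lam n * (fr n - fsv)) \<le> 3 * (1 + 1/c0^2) * (cos (k * dist (xs (Suc n)) pm) - cos (k * dist (xs n) pm))"
    by (rule G5[OF g near[OF pm_Fm g] c0 c0le H]) auto
  then show ?thesis by (simp add: KK_def)
qed


lemma fr_dec: "fr (Suc n) \<le> fr n"
proof -
  have "fr (Suc n) + Psi \<kappa> (xs (Suc n)) (xs (Suc (Suc n))) / lam (Suc n)
        \<le> fr n + Psi \<kappa> (xs (Suc n)) (xs (Suc n)) / lam (Suc n)"
    by (rule resR[OF fr fr])
  moreover have "0 \<le> Psi \<kappa> (xs (Suc n)) (xs (Suc (Suc n))) / lam (Suc n)"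
    using Psi_nonneg lampos by (simp add: less_imp_le)
  ultimately show ?thesis by (simp add: Psi_self)
qed

lemma fr_decseq: "decseq fr" by (intro decseq_SucI fr_dec)

lemma fr_small: assumes e: "e > 0" shows "\<exists>N. fr N - fsv < e"
proof (rule ccontr)
  assume "\<not> (\<exists>N. fr N - fsv < e)"
  hence ge: "\<And>n. e \<le> fr n - fsv" by (simp add: not_less)
  have "summable lam"
  proof (rule summableI_nonneg_bounded)
    show "0 \<le> lam n" for n using lampos by (simp add: less_imp_le)
    fix N
    have "(\<Sum>n<N. \<kappa> * (lam n * (fr n - fsv))) \<le> (\<Sum>n<N. KK * (cos (k * dist (xs (Suc n)) pm) - cos (k * dist (xs n) pm)))"
      by (intro sum_mono estimate)
    also have "\<dots> = KK * (cos (k * dist (xs N) pm) - cos (k * dist (xs 0) pm))"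
      by (simp add: sum_distrib_left[symmetric] sum_lessThan_telescope[of "\<lambda>n. cos (k * dist (xs n) pm)"])
    also have "\<dots> \<le> KK * 1"
    proof (rule mult_left_mono)
      show "0 \<le> KK" using c0 by (simp add: KK_def add_nonneg_nonneg)
      show "cos (k * dist (xs N) pm) - cos (k * dist (xs 0) pm) \<le> 1"
        using cos_pos[of "xs 0" pm] cos_le_one[of "k * dist (xs N) pm"] by linarith
    qed
    finally have A: "(\<Sum>n<N. \<kappa> * (lam n * (fr n - fsv))) \<le> KK" by simp
    have "(\<Sum>n<N. lam n) * (\<kappa> * e) = (\<Sum>n<N. \<kappa> * (lam n * e))" by (simp add: sum_distrib_right sum_distrib_left algebra_simps)
    also have "\<dots> \<le> (\<Sum>n<N. \<kappa> * (lam n * (fr n - fsv)))"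
      using ge lampos kpos by (intro sum_mono mult_left_mono) (auto simp: less_imp_le)
    finally have "(\<Sum>n<N. lam n) * (\<kappa> * e) \<le> KK" using A by linarith
    then show "(\<Sum>n<N. lam n) \<le> KK / (\<kappa> * e)" using kpos e by (simp add: le_divide_eq)
  qed
  then show False using nsum by simp
qed

lemma f_ev: assumes e: "e > 0" shows "eventually (\<lambda>n. f (xs n) \<le> ereal (fsv + e)) sequentially"
proof -
  obtain N where N: "fr N - fsv < e" using fr_small[OF e] by blast
  show ?thesis unfolding eventually_sequentially
  proof (intro exI allI impI)
    fix n assume "Suc N \<le> n"
    then obtain j where j: "n = Suc j" "N \<le> j" by (cases n) auto
    have "fr j \<le> fr N" using fr_decseq j(2) by (simp add: decseq_def)
    then show "f (xs n) \<le> ereal (fsv + e)" using N j fr[of j] by simp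
  qed
qed

end




context ppa
begin

definition "Cs e = {y. f y \<le> ereal (fsv + e)}"

lemma Cs_closed: "closed (Cs e)"
  using lsc by (simp add: Cs_def lsc_fun_def)

lemma pm_Cs: "e \<ge> 0 \<Longrightarrow> pm \<in> Cs e"
  using f_Fm[OF pm_Fm] by (simp add: Cs_def)

lemma Cs_fin: assumes "w \<in> Cs e" obtains a where "f w = ereal a" "a \<le> fsv + e"
proof -
  have "f w \<noteq> \<infinity>" using assms by (auto simp: Cs_def)
  then obtain a where a: "f w = ereal a" using fin by blast
  then show ?thesis using that assms by (simp add: Cs_def)
qed

lemma Cs_seg:
  assumes u: "u \<in> Cs e" and v: "v \<in> Cs e" and g: "geodesic_path \<gamma> u v" and s: "0 \<le> s" "s \<le> dist u v"
  shows "\<gamma> s \<in> Cs e"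
proof (cases "dist u v = 0")
  case True
  then have "s = 0" using s by simp
  then show ?thesis using g u by (simp add: geodesic_path_def)
next
  case False
  define t where "t = s / dist u v"
  have t: "0 \<le> t" "t \<le> 1" "s = t * dist u v" using s False by (auto simp: t_def)
  obtain a where a: "f u = ereal a" "a \<le> fsv + e" using Cs_fin[OF u] .
  obtain b where b: "f v = ereal b" "b \<le> fsv + e" using Cs_fin[OF v] .
  obtain c where c: "f (\<gamma> (t * dist u v)) = ereal c" "c \<le> (1-t)*a + t*b"
    using conv_real[OF g t(1,2) a(1) b(1)] .
  have "(1-t)*a + t*b \<le> (1-t)*(fsv+e) + t*(fsv+e)"
    using a b t by (intro add_mono mult_left_mono) auto
  then show ?thesis using c t by (simp add: Cs_def algebra_simps)
qed

lemma proj: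
  assumes e: "e \<ge> 0"
  obtains P where "P \<in> Cs e" "\<And>z. z \<in> Cs e \<Longrightarrow> dist P z \<le> dist u z"
proof -
  have "\<exists>P\<in>Cs e. \<forall>w\<in>Cs e. cos (k * dist u w) \<le> cos (k * dist u P)"
  proof (rule ME[OF compl Cs_closed])
    show "\<gamma> (dist u' v / 2) \<in> Cs e" if "u' \<in> Cs e" "v \<in> Cs e" "geodesic_path \<gamma> u' v" for u' v \<gamma>
      using Cs_seg[OF that] by simp
    show "cos (k * dist u w) \<le> 1" for w by simp
    show "continuous_on UNIV (\<lambda>w. cos (k * dist u w))" by (intro continuous_intros)
    show "pm \<in> Cs e" using pm_Cs[OF e] .
    show "cos (k * dist u pm) > 0" by (rule cos_pos)
    show "cos (k * dist u u') + cos (k * dist u v) \<le> 2 * cos (k * dist u' v / 2) * cos (k * dist u (\<gamma> (dist u' v / 2)))"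
      if "u' \<in> Cs e" "v \<in> Cs e" "geodesic_path \<gamma> u' v" for u' v \<gamma>
      using G4[OF that(3)] .
  qed
  then obtain P where P: "P \<in> Cs e" "\<And>w. w \<in> Cs e \<Longrightarrow> dist u P \<le> dist u w"
    by (auto simp: cos_le_iff)
  have "dist P z \<le> dist u z" if z: "z \<in> Cs e" for z
  proof -
    obtain \<gamma> where g: "geodesic_path \<gamma> P z" using geo_ex by blast
    have "cos (k * dist u z) \<le> cos (k * dist u P) * cos (k * dist P z)"
      using G3[OF g, of u] P(2)[OF Cs_seg[OF P(1) z g]] by simp
    also have "\<dots> \<le> 1 * cos (k * dist P z)"
      using cos_pos[of P z] by (intro mult_right_mono) auto
    finally show ?thesis by (simp add: cos_le_iff)
  qed
  then show ?thesis using that P(1) by blast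
qed


lemma center:
  assumes g: "strict_mono g"
  obtains u where "asym_center (xs \<circ> g) = {u}" "u \<in> Fm" "\<And>w. w \<noteq> u \<Longrightarrow> Rr (xs \<circ> g) u < Rr (xs \<circ> g) w"
proof -
  define s where "s = xs \<circ> g"
  define \<psi> where "\<psi> = (\<lambda>w. cos (k * Rr s w))"
  have kR: "0 \<le> k * Rr s w" "k * Rr s w \<le> pi" for w
    using R_bnd[of s w] kgt pi_gt_zero by (simp, linarith)
  have Rpm: "Rr s pm \<le> dist (xs 0) pm"
  proof (rule R_leI)
    fix e :: real assume e: "e > 0"
    have "dist pm (s n) < dist (xs 0) pm + e" for n
      using fejer0[OF pm_Fm, of "g n"] e by (simp add: s_def dist_commute)
    then show "eventually (\<lambda>n. dist pm (s n) < dist (xs 0) pm + e) sequentially"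
      by (intro always_eventually) auto
  qed
  have pos: "\<psi> pm > 0"
  proof -
    have "cos (k * dist (xs 0) pm) \<le> cos (k * Rr s pm)"
      using kR[of pm] Rpm kgt kd[of "xs 0" pm] pi_gt_zero by (intro cos_monotone_0_pi_le) auto
    then show ?thesis using cos_pos[of "xs 0" pm] by (simp add: \<psi>_def)
  qed
  have "\<exists>u\<in>UNIV. \<forall>w\<in>UNIV. \<psi> w \<le> \<psi> u"
  proof (rule ME[OF compl closed_UNIV])
    show "\<psi> w \<le> 1" for w by (simp add: \<psi>_def)
    show "continuous_on UNIV \<psi>" unfolding \<psi>_def by (rule R_cont)
    show "\<psi> u + \<psi> v \<le> 2 * cos (k * dist u v / 2) * \<psi> (\<gamma> (dist u v / 2))" if "geodesic_path \<gamma> u v" for u v \<gamma>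
      unfolding \<psi>_def by (rule R_mid[OF that])
  qed (use pos in auto)
  then obtain u where u: "\<And>w. \<psi> w \<le> \<psi> u" by blast
  have upos: "\<psi> u > 0" using u[of pm] pos by simp
  have umin: "Rr s u \<le> Rr s w" for w
  proof -
    have "cos (k * Rr s w) \<le> cos (k * Rr s u)" using u[of w] by (simp add: \<psi>_def)
    hence "k * Rr s u \<le> k * Rr s w" using kR[of u] kR[of w] by (simp add: cos_mono_le_eq)
    then show ?thesis using kgt by simp
  qed
  have uniq: "w = u" if "Rr s w = Rr s u" for w
  proof (rule ME_uniq[of UNIV \<psi>])
    show "\<forall>v\<in>UNIV. \<psi> v \<le> \<psi> w" using u that by (simp add: \<psi>_def)
    show "\<forall>v\<in>UNIV. \<psi> v \<le> \<psi> u" using u by simp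
    show "\<psi> w + \<psi> v \<le> 2 * cos (k * dist w v / 2) * \<psi> (\<gamma> (dist w v / 2))" if "geodesic_path \<gamma> w v" for w v \<gamma>
      unfolding \<psi>_def by (rule R_mid[OF that])
    show "\<psi> w > 0" using upos that by (simp add: \<psi>_def)
  qed auto
  have strict: "Rr s u < Rr s w" if "w \<noteq> u" for w
    using umin[of w] uniq[of w] that by linarith
  have rad: "asym_radius s = ereal (Rr s u)"
    unfolding asym_radius_def
  proof (rule antisym)
    show "(INF w. asym_r w s) \<le> ereal (Rr s u)" by (metis INF_lower UNIV_I R_eq)
    show "ereal (Rr s u) \<le> (INF w. asym_r w s)" by (rule INF_greatest) (simp add: R_eq umin)
  qed
  have cent: "asym_center s = {u}"
    unfolding asym_center_def rad using uniq by (auto simp: R_eq)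
  have uF: "u \<in> Fm"
  proof -
    have key: "f u \<le> ereal fsv + ereal e" if e: "e > 0" for e
    proof -
      obtain P where P: "P \<in> Cs e" "\<And>z. z \<in> Cs e \<Longrightarrow> dist P z \<le> dist u z"
        using proj[of e u] e by auto
      obtain N where N: "\<And>n. n \<ge> N \<Longrightarrow> f (xs n) \<le> ereal (fsv + e)"
        using f_ev[OF e] by (auto simp: eventually_sequentially)
      have "eventually (\<lambda>n. dist P (s n) \<le> dist u (s n)) sequentially"
        unfolding eventually_sequentially
      proof (intro exI allI impI)
        fix n assume "N \<le> n"
        hence "N \<le> g n" using seq_suble[OF g, of n] by linarith
        hence "s n \<in> Cs e" using N by (simp add: s_def Cs_def)
        then show "dist P (s n) \<le> dist u (s n)" by (rule P(2))
      qed
      hence "Rr s P \<le> Rr s u" by (rule R_mono)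
      hence "P = u" using strict[of P] by (cases "P = u") auto
      then show ?thesis using P(1) by (simp add: Cs_def)
    qed
    have fu: "f u \<le> ereal fsv" by (rule ereal_le_epsilon2[OF key])
    have "f u \<le> f y" for y
    proof -
      have "f pm \<le> f y" using pm_Fm by (simp add: Fm_def)
      then show ?thesis using fu f_Fm[OF pm_Fm] by simp
    qed
    then show ?thesis by (simp add: Fm_def)
  qed
  show ?thesis using that[of u] cent uF strict by (simp add: s_def)
qed

lemma main: "\<exists>m. (\<forall>y. f m \<le> f y) \<and> Delta_converges xs m"
proof -
  obtain u0 where u0: "asym_center (xs \<circ> id) = {u0}" "u0 \<in> Fm"
    "\<And>w. w \<noteq> u0 \<Longrightarrow> Rr (xs \<circ> id) u0 < Rr (xs \<circ> id) w"
    using center[of id] by (auto simp: strict_mono_def)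
  have lim: "\<exists>L. (\<lambda>n. dist m (xs n)) \<longlonglongrightarrow> L" if mF: "m \<in> Fm" for m
  proof -
    obtain L where "(\<lambda>n. dist (xs n) m) \<longlonglongrightarrow> L" using decseq_convergent[OF fejer_dec[OF mF], of 0] by auto
    then show ?thesis by (auto simp: dist_commute)
  qed
  have all: "asym_center (xs \<circ> g) = {u0}" if g: "strict_mono g" for g
  proof -
    obtain u where u: "asym_center (xs \<circ> g) = {u}" "u \<in> Fm"
      "\<And>w. w \<noteq> u \<Longrightarrow> Rr (xs \<circ> g) u < Rr (xs \<circ> g) w"
      using center[OF g] by blast
    have "u = u0"
    proof (rule ccontr)
      assume ne: "u \<noteq> u0"
      obtain Lu where Lu: "(\<lambda>n. dist u (xs n)) \<longlonglongrightarrow> Lu" using lim[OF u(2)] by blast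
      obtain L0 where L0: "(\<lambda>n. dist u0 (xs n)) \<longlonglongrightarrow> L0" using lim[OF u0(2)] by blast
      have sub: "Rr (xs \<circ> h) m = L" if "(\<lambda>n. dist m (xs n)) \<longlonglongrightarrow> L" "strict_mono h" for m L h
        using LIMSEQ_subseq_LIMSEQ[OF that] by (intro R_lim) (simp add: comp_def)
      have "Lu < L0" using u(3)[OF ne[symmetric]] sub[OF Lu g] sub[OF L0 g] by simp
      moreover have "L0 < Lu" using u0(3)[OF ne] sub[OF Lu, of id] sub[OF L0, of id]
        by (simp add: strict_mono_def)
      ultimately show False by simp
    qed
    then show ?thesis using u(1) by simp
  qed
  have "\<forall>y. f u0 \<le> f y" using u0(2) by (simp add: Fm_def)
  moreover have "Delta_converges xs u0" using all by (simp add: Delta_converges_def)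
  ultimately show ?thesis by blast
qed

end


theorem mainTheorem3:
  fixes \<kappa> :: real and f :: "'a::metric_space \<Rightarrow> ereal"
    and lam :: "nat \<Rightarrow> real" and x :: "nat \<Rightarrow> 'a"
  assumes "\<kappa> > 0"
    and "complete (UNIV :: 'a set)"
    and "CAT_space \<kappa> TYPE('a)"
    and "\<forall>v w::'a. dist v w < pi / (2 * sqrt \<kappa>)"
    and "proper_fun f" and "geod_convex_fun f" and "lsc_fun f"
    and "\<exists>m. \<forall>y. f m \<le> f y"
    and "\<forall>n. lam n > 0" and "\<not> summable lam"
    and "\<forall>n. x (Suc n) \<in> resolvent_set \<kappa> f (lam n) (x n)"
  shows "\<exists>m. (\<forall>y. f m \<le> f y) \<and> Delta_converges x m"
  proof -
  interpret ppa \<kappa> "TYPE('a)" f lam x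
    by unfold_locales (use assms in auto)
  show ?thesis by (rule main)
qed

end
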